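(* Let $O=\langle B,E,F,\mathsf c\rangle$ be an occurrence net and let $\mathcal C(O)=\langle S,E,F',I,\emptyset,\mathsf m,\ell\rangle$ be the associated net, where $S=\{(\ast,e)\mid e\in E\}\cup\{(e,\ast)\mid e\in E\}\cup\{\{e,e'\}\mid e\ \#\ e'\}$, $F'=\{((\ast,e),e)\mid e\in E\}\cup\{(s,e)\mid s=\{e,e'\}\in S\}\cup\{(e,(e,\ast))\mid e\in E\}$, $I=\{((\ast,e'),e)\mid e'<_O e\}$, $\mathsf m(s)=0$ if $s=(e,\ast)$ and $\mathsf m(s)=1$ otherwise, and $\ell$ is the identity. Then $\mathcal C(O)$ is an occurrence causal net.
   Context: Occurrence nets: a net $\langle S,T,F,\mathsf m\rangle$ has disjoint places/transitions, flow $F$, initial marking $\mathsf m$; ${}^\bullet x,x^\bullet$ pre/postsets; $t$ enabled at $m$ if ${}^\bullet t\subseteq m$, firing gives $m-{}^\bullet t+t^\bullet$. $<_N$ is the transitive closure of $F$, $\le_N$ its reflexive closure; acyclic means $\le_N$ is a partial order; safe means at most one token per place in reachable markings. An occurrence net $O=\langle B,E,F,\mathsf c\rangle$ is an acyclic safe net with: ${}^\bullet b$ empty or a singleton, ${}^\bullet b=\emptyset$ for $b\in\mathsf c$; each $b$ has some $b'\in\mathsf c$ with $b'\le_O b$; $\{e'\mid e'\le_O e\}$ finite; and $\#$ (with $e\ \#_0\ e'$ iff $e\neq e'$ and ${}^\bullet e\cap{}^\bullet e'\neq\emptyset$; $x\ \#\ x'$ iff $y\ \#_0\ y'$ for some $y\le_O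 x$, $y'\le_O x'$) irreflexive. Contextual/causal nets: a labelled contextual net $N=\langle S,T,F,I,R,\mathsf m,\ell\rangle$ has inhibitor arcs $I\subseteq S\times T$, read arcs $R\subseteq S\times T$, labelling $\ell:T\to L$; ${}^\circ t=\{s\mid(s,t)\in I\}$, $\underline t=\{s\mid(s,t)\in R\}$; every transition has nonempty preset; $t$ enabled at $m$ if ${}^\bullet t+\underline t\subseteq m$ and $m(s)=0$ for $s\in{}^\circ t$; firing gives $m-{}^\bullet t+t^\bullet$. States are multisets of transitions of finite firing sequences from $\mathsf m$, $\lfloor X\rfloor$ the support. Nets are assumed safe. $t\prec_N t'$ iff ${}^\bullet t\cap{}^\circ t'\neq\emptyset$ or $t^\bullet\cap\underline{t'}\neq\emptyset$; $t\ \#_N\ t'$ iff no state contains both in its support. Pre-causal: (1) $<_N\cap(T\times T)=\emptyset$, ${}^\bullet t\cap{}^\circ t=\emptyset$, $t^\bullet\cap\underline t=\emptyset$; (2) $|\ell(s^\bullet)|=1$ for $s\in{}^\circ t$; (3) $t\prec_N t'\Rightarrow$ not $t'\prec_N t$; (4) ${}^\circ t\cup\underline t$ finite; (5) $t\ \#_N\ t'\Rightarrow {}^\bullet t\cap{}^\bullet t'\neq\emptyset$; (6) $t\neq t'$, $\ell(t)=\ell(t')\Rightarrow t\ \#_N\ t'$. Causal net: pre-causal and (a) $\prec^*$ restricted to the support of each state is a partial order, (b) every transition is in the support of some state. An occurrence causal net is a causal net $K$ with $R=\emptyset$, $\ell$ injective, $\prec_K^{*}$ a partial order on all of $T$, and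 such that $t\ \#_K\ t'$ and $t'\prec_K^{*}t''$ imply $t\ \#_K\ t''$. *)

theory Defs
  imports Main "HOL-Library.Multiset"
begin

text \<open>The flow relation F is a relation on nodes (Inl = place, Inr = transition).
  Inhibitor and read arcs are relations between places and transitions.
  Markings are functions from places to nat.\<close>

definition preset :: "('s + 't) rel \<Rightarrow> 't \<Rightarrow> 's set" where
  "preset F t = {s. (Inl s, Inr t) \<in> F}"

definition postset :: "('s + 't) rel \<Rightarrow> 't \<Rightarrow> 's set" where
  "postset F t = {s. (Inr t, Inl s) \<in> F}"

definition pl_preset :: "('s + 't) rel \<Rightarrow> 's \<Rightarrow> 't set" where
  "pl_preset F s = {t. (Inr t, Inl s) \<in> F}"

definition pl_postset :: "('s + 't) rel \<Rightarrow> 's \<Rightarrow> 't set" where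
  "pl_postset F s = {t. (Inl s, Inr t) \<in> F}"

definition inhset :: "('s \<times> 't) set \<Rightarrow> 't \<Rightarrow> 's set" where
  "inhset I t = {s. (s, t) \<in> I}"

definition readset :: "('s \<times> 't) set \<Rightarrow> 't \<Rightarrow> 's set" where
  "readset R t = {s. (s, t) \<in> R}"

definition is_net :: "'s set \<Rightarrow> 't set \<Rightarrow> ('s + 't) rel \<Rightarrow> ('s \<Rightarrow> nat) \<Rightarrow> bool" where
  "is_net S T F m \<longleftrightarrow>
     F \<subseteq> (Inl ` S \<times> Inr ` T) \<union> (Inr ` T \<times> Inl ` S) \<and> (\<forall>s. 0 < m s \<longrightarrow> s \<in> S)"

definition enabled :: "'t set \<Rightarrow> ('s + 't) rel \<Rightarrow> ('s \<times> 't) set \<Rightarrow> ('s \<times> 't) set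
    \<Rightarrow> ('s \<Rightarrow> nat) \<Rightarrow> 't \<Rightarrow> bool" where
  "enabled T F I R m t \<longleftrightarrow> t \<in> T \<and>
     (\<forall>s. (if s \<in> preset F t then 1 else 0) + (if s \<in> readset R t then 1 else 0) \<le> m s) \<and>
     (\<forall>s \<in> inhset I t. m s = 0)"

definition fire :: "('s + 't) rel \<Rightarrow> ('s \<Rightarrow> nat) \<Rightarrow> 't \<Rightarrow> ('s \<Rightarrow> nat)" where
  "fire F m t = (\<lambda>s. m s - (if s \<in> preset F t then 1 else 0) + (if s \<in> postset F t then 1 else 0))"

inductive fseq :: "'t set \<Rightarrow> ('s + 't) rel \<Rightarrow> ('s \<times> 't) set \<Rightarrow> ('s \<times> 't) set
    \<Rightarrow> ('s \<Rightarrow> nat) \<Rightarrow> 't list \<Rightarrow> ('s \<Rightarrow> nat) \<Rightarrow> bool"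
  for T F I R m0 where
  fseq_Nil: "fseq T F I R m0 [] m0"
| fseq_snoc: "fseq T F I R m0 \<sigma> m \<Longrightarrow> enabled T F I R m t \<Longrightarrow> fseq T F I R m0 (\<sigma> @ [t]) (fire F m t)"

definition reach_markings :: "'t set \<Rightarrow> ('s + 't) rel \<Rightarrow> ('s \<times> 't) set \<Rightarrow> ('s \<times> 't) set
    \<Rightarrow> ('s \<Rightarrow> nat) \<Rightarrow> ('s \<Rightarrow> nat) set" where
  "reach_markings T F I R m0 = {m. \<exists>\<sigma>. fseq T F I R m0 \<sigma> m}"

definition states :: "'t set \<Rightarrow> ('s + 't) rel \<Rightarrow> ('s \<times> 't) set \<Rightarrow> ('s \<times> 't) set
    \<Rightarrow> ('s \<Rightarrow> nat) \<Rightarrow> 't multiset set" where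
  "states T F I R m0 = {mset \<sigma> | \<sigma>. \<exists>m. fseq T F I R m0 \<sigma> m}"

definition safe_net :: "'t set \<Rightarrow> ('s + 't) rel \<Rightarrow> ('s \<times> 't) set \<Rightarrow> ('s \<times> 't) set
    \<Rightarrow> ('s \<Rightarrow> nat) \<Rightarrow> bool" where
  "safe_net T F I R m0 \<longleftrightarrow> (\<forall>m \<in> reach_markings T F I R m0. \<forall>s. m s \<le> 1)"

definition marking_of_set :: "'b set \<Rightarrow> 'b \<Rightarrow> nat" where
  "marking_of_set c = (\<lambda>b. if b \<in> c then 1 else 0)"

definition occ_conflict0 :: "'e set \<Rightarrow> ('b + 'e) rel \<Rightarrow> 'e \<Rightarrow> 'e \<Rightarrow> bool" where
  "occ_conflict0 E F e e' \<longleftrightarrow> e \<in> E \<and> e' \<in> E \<and> e \<noteq> e' \<and> preset F e \<inter> preset F e' \<noteq> {}"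

text \<open>x # x' iff y #0 y' for some y \<le>_O x, y' \<le>_O x' (\<le>_O = F^*).\<close>
definition occ_conflict :: "'e set \<Rightarrow> ('b + 'e) rel \<Rightarrow> ('b + 'e) \<Rightarrow> ('b + 'e) \<Rightarrow> bool" where
  "occ_conflict E F x x' \<longleftrightarrow>
     (\<exists>y y'. (Inr y, x) \<in> F\<^sup>* \<and> (Inr y', x') \<in> F\<^sup>* \<and> occ_conflict0 E F y y')"

definition occurrence_net :: "'b set \<Rightarrow> 'e set \<Rightarrow> ('b + 'e) rel \<Rightarrow> 'b set \<Rightarrow> bool" where
  "occurrence_net B E F c \<longleftrightarrow>
     is_net B E F (marking_of_set c) \<and>
     partial_order_on (Inl ` B \<union> Inr ` E) (Restr (F\<^sup>*) (Inl ` B \<union> Inr ` E)) \<and>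
     safe_net E F {} {} (marking_of_set c) \<and>
     (\<forall>b \<in> B. pl_preset F b = {} \<or> (\<exists>e. pl_preset F b = {e})) \<and>
     (\<forall>b \<in> c. pl_preset F b = {}) \<and>
     (\<forall>b \<in> B. \<exists>b' \<in> c. (Inl b', Inl b) \<in> F\<^sup>*) \<and>
     (\<forall>e \<in> E. finite {e'. (Inr e', Inr e) \<in> F\<^sup>*}) \<and>
     (\<forall>x. \<not> occ_conflict E F x x)"

definition contextual_net :: "'s set \<Rightarrow> 't set \<Rightarrow> ('s + 't) rel \<Rightarrow> ('s \<times> 't) set \<Rightarrow> ('s \<times> 't) set
    \<Rightarrow> ('s \<Rightarrow> nat) \<Rightarrow> ('t \<Rightarrow> 'l) \<Rightarrow> bool" where
  "contextual_net S T F I R m lab \<longleftrightarrow>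
     is_net S T F m \<and> I \<subseteq> S \<times> T \<and> R \<subseteq> S \<times> T \<and>
     (\<forall>t \<in> T. preset F t \<noteq> {}) \<and> safe_net T F I R m"

definition prec :: "('s + 't) rel \<Rightarrow> ('s \<times> 't) set \<Rightarrow> ('s \<times> 't) set \<Rightarrow> 't \<Rightarrow> 't \<Rightarrow> bool" where
  "prec F I R t t' \<longleftrightarrow> preset F t \<inter> inhset I t' \<noteq> {} \<or> postset F t \<inter> readset R t' \<noteq> {}"

definition prec_rel :: "'t set \<Rightarrow> ('s + 't) rel \<Rightarrow> ('s \<times> 't) set \<Rightarrow> ('s \<times> 't) set \<Rightarrow> 't rel" where
  "prec_rel T F I R = {(t, t'). t \<in> T \<and> t' \<in> T \<and> prec F I R t t'}"

definition cn_conflict :: "'t set \<Rightarrow> ('s + 't) rel \<Rightarrow> ('s \<times> 't) set \<Rightarrow> ('s \<times> 't) set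
    \<Rightarrow> ('s \<Rightarrow> nat) \<Rightarrow> 't \<Rightarrow> 't \<Rightarrow> bool" where
  "cn_conflict T F I R m t t' \<longleftrightarrow> \<not> (\<exists>X \<in> states T F I R m. t \<in># X \<and> t' \<in># X)"

definition pre_causal :: "'s set \<Rightarrow> 't set \<Rightarrow> ('s + 't) rel \<Rightarrow> ('s \<times> 't) set \<Rightarrow> ('s \<times> 't) set
    \<Rightarrow> ('s \<Rightarrow> nat) \<Rightarrow> ('t \<Rightarrow> 'l) \<Rightarrow> bool" where
  "pre_causal S T F I R m lab \<longleftrightarrow>
     contextual_net S T F I R m lab \<and>
     (\<forall>t \<in> T. \<forall>t' \<in> T. (Inr t, Inr t') \<notin> F\<^sup>+) \<and>
     (\<forall>t \<in> T. preset F t \<inter> inhset I t = {} \<and> postset F t \<inter> readset R t = {}) \<and>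
     (\<forall>t \<in> T. \<forall>s \<in> inhset I t. card (lab ` pl_postset F s) = 1) \<and>
     (\<forall>t \<in> T. \<forall>t' \<in> T. prec F I R t t' \<longrightarrow> \<not> prec F I R t' t) \<and>
     (\<forall>t \<in> T. finite (inhset I t \<union> readset R t)) \<and>
     (\<forall>t \<in> T. \<forall>t' \<in> T. cn_conflict T F I R m t t' \<longrightarrow> preset F t \<inter> preset F t' \<noteq> {}) \<and>
     (\<forall>t \<in> T. \<forall>t' \<in> T. t \<noteq> t' \<and> lab t = lab t' \<longrightarrow> cn_conflict T F I R m t t')"

definition causal_net :: "'s set \<Rightarrow> 't set \<Rightarrow> ('s + 't) rel \<Rightarrow> ('s \<times> 't) set \<Rightarrow> ('s \<times> 't) set
    \<Rightarrow> ('s \<Rightarrow> nat) \<Rightarrow> ('t \<Rightarrow> 'l) \<Rightarrow> bool" where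
  "causal_net S T F I R m lab \<longleftrightarrow>
     pre_causal S T F I R m lab \<and>
     (\<forall>X \<in> states T F I R m.
        partial_order_on (set_mset X) (Restr ((prec_rel T F I R)\<^sup>*) (set_mset X))) \<and>
     (\<forall>t \<in> T. \<exists>X \<in> states T F I R m. t \<in># X)"

definition occurrence_causal_net :: "'s set \<Rightarrow> 't set \<Rightarrow> ('s + 't) rel \<Rightarrow> ('s \<times> 't) set
    \<Rightarrow> ('s \<times> 't) set \<Rightarrow> ('s \<Rightarrow> nat) \<Rightarrow> ('t \<Rightarrow> 'l) \<Rightarrow> bool" where
  "occurrence_causal_net S T F I R m lab \<longleftrightarrow>
     causal_net S T F I R m lab \<and> R = {} \<and> inj_on lab T \<and>
     partial_order_on T (Restr ((prec_rel T F I R)\<^sup>*) T) \<and>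
     (\<forall>t \<in> T. \<forall>t' \<in> T. \<forall>t'' \<in> T.
        cn_conflict T F I R m t t' \<and> (t', t'') \<in> (prec_rel T F I R)\<^sup>* \<longrightarrow> cn_conflict T F I R m t t'')"

text \<open>PreP e = (*,e), PostP e = (e,*), ConflP {e,e'} for e # e'.\<close>
datatype 'e cplace = PreP 'e | PostP 'e | ConflP "'e set"

definition CO_S :: "'e set \<Rightarrow> ('b + 'e) rel \<Rightarrow> 'e cplace set" where
  "CO_S E F = PreP ` E \<union> PostP ` E \<union>
     {ConflP {e, e'} | e e'. e \<in> E \<and> e' \<in> E \<and> occ_conflict E F (Inr e) (Inr e')}"

definition CO_F :: "'e set \<Rightarrow> ('b + 'e) rel \<Rightarrow> ('e cplace + 'e) rel" where
  "CO_F E F = {(Inl (PreP e), Inr e) | e. e \<in> E}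
     \<union> {(Inl s, Inr e) | s e e'. s = ConflP {e, e'} \<and> s \<in> CO_S E F}
     \<union> {(Inr e, Inl (PostP e)) | e. e \<in> E}"

definition CO_I :: "'e set \<Rightarrow> ('b + 'e) rel \<Rightarrow> ('e cplace \<times> 'e) set" where
  "CO_I E F = {(PreP e', e) | e e'. e \<in> E \<and> e' \<in> E \<and> (Inr e', Inr e) \<in> F\<^sup>+}"

definition CO_m :: "'e set \<Rightarrow> ('b + 'e) rel \<Rightarrow> 'e cplace \<Rightarrow> nat" where
  "CO_m E F s = (if s \<in> CO_S E F \<and> (\<forall>e. s \<noteq> PostP e) then 1 else 0)"

end

theory Submission
  imports Defs
begin

definition mk :: "'e set \<Rightarrow> ('b + 'e) rel \<Rightarrow> 'e set \<Rightarrow> 'e cplace \<Rightarrow> nat" where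
  "mk E F A s = (case s of PreP e \<Rightarrow> if e \<in> E \<and> e \<notin> A then 1 else 0
     | PostP e \<Rightarrow> if e \<in> A then 1 else 0
     | ConflP X \<Rightarrow> if ConflP X \<in> CO_S E F \<and> X \<inter> A = {} then 1 else 0)"

lemma CO_S_PreP[simp]: "PreP e \<in> CO_S E F \<longleftrightarrow> e \<in> E"
  by (auto simp: CO_S_def)
lemma CO_S_PostP[simp]: "PostP e \<in> CO_S E F \<longleftrightarrow> e \<in> E"
  by (auto simp: CO_S_def)
lemma CO_S_ConflP: "ConflP X \<in> CO_S E F \<longleftrightarrow>
   (\<exists>a b. X = {a,b} \<and> a \<in> E \<and> b \<in> E \<and> occ_conflict E F (Inr a) (Inr b))"
  by (auto simp: CO_S_def)

lemma CO_S_ConflP_sub: "ConflP X \<in> CO_S E F \<Longrightarrow> X \<subseteq> E"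
  by (auto simp: CO_S_ConflP)

lemma pre_PreP[simp]: "PreP e \<in> preset (CO_F E F) t \<longleftrightarrow> e = t \<and> t \<in> E"
  by (auto simp: preset_def CO_F_def)
lemma pre_PostP[simp]: "PostP e \<notin> preset (CO_F E F) t"
  by (auto simp: preset_def CO_F_def)
lemma pre_ConflP: "ConflP X \<in> preset (CO_F E F) t \<longleftrightarrow> t \<in> X \<and> ConflP X \<in> CO_S E F"
  by (auto simp: preset_def CO_F_def CO_S_ConflP insert_commute)

lemma post_PostP[simp]: "PostP e \<in> postset (CO_F E F) t \<longleftrightarrow> e = t \<and> t \<in> E"
  by (auto simp: postset_def CO_F_def)
lemma post_PreP[simp]: "PreP e \<notin> postset (CO_F E F) t"
  by (auto simp: postset_def CO_F_def)
lemma post_ConflP[simp]: "ConflP X \<notin> postset (CO_F E F) t"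
  by (auto simp: postset_def CO_F_def)

lemma inh_PreP[simp]: "PreP e \<in> inhset (CO_I E F) t \<longleftrightarrow> t \<in> E \<and> e \<in> E \<and> (Inr e, Inr t) \<in> F\<^sup>+"
  by (auto simp: inhset_def CO_I_def)
lemma inh_PostP[simp]: "PostP e \<notin> inhset (CO_I E F) t"
  by (auto simp: inhset_def CO_I_def)
lemma inh_ConflP[simp]: "ConflP X \<notin> inhset (CO_I E F) t"
  by (auto simp: inhset_def CO_I_def)

lemma CO_m_mk: "CO_m E F = mk E F {}"
  by (rule ext, simp add: CO_m_def mk_def split: cplace.split)

lemma fire_mk:
  assumes "t \<in> E" "t \<notin> A" "\<forall>X. ConflP X \<in> CO_S E F \<and> t \<in> X \<longrightarrow> X \<inter> A = {}"
  shows "fire (CO_F E F) (mk E F A) t = mk E F (insert t A)"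
proof (rule ext)
  fix s show "fire (CO_F E F) (mk E F A) t s = mk E F (insert t A) s"
    using assms by (cases s) (auto simp: fire_def mk_def pre_ConflP)
qed

lemma enabled_mk:
  "enabled E (CO_F E F) (CO_I E F) {} (mk E F A) t \<longleftrightarrow>
    t \<in> E \<and> t \<notin> A \<and> (\<forall>X. ConflP X \<in> CO_S E F \<and> t \<in> X \<longrightarrow> X \<inter> A = {}) \<and>
    (\<forall>e'\<in>E. (Inr e', Inr t) \<in> F\<^sup>+ \<longrightarrow> e' \<in> A)"
proof
  assume en: "enabled E (CO_F E F) (CO_I E F) {} (mk E F A) t"
  hence tE: "t \<in> E" and pre: "\<forall>s. (if s \<in> preset (CO_F E F) t then 1 else 0) \<le> mk E F A s"
    and inh: "\<forall>s \<in> inhset (CO_I E F) t. mk E F A s = 0"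
    by (auto simp: enabled_def readset_def)
  have "t \<notin> A" using pre[rule_format, of "PreP t"] tE by (simp add: mk_def split: if_splits)
  moreover have "\<forall>X. ConflP X \<in> CO_S E F \<and> t \<in> X \<longrightarrow> X \<inter> A = {}"
  proof (intro allI impI)
    fix X assume "ConflP X \<in> CO_S E F \<and> t \<in> X"
    thus "X \<inter> A = {}" using pre[rule_format, of "ConflP X"]
      by (auto simp: mk_def pre_ConflP split: if_splits)
  qed
  moreover have "\<forall>e'\<in>E. (Inr e', Inr t) \<in> F\<^sup>+ \<longrightarrow> e' \<in> A"
  proof (intro ballI impI)
    fix e' assume "e' \<in> E" "(Inr e', Inr t) \<in> F\<^sup>+"
    hence "PreP e' \<in> inhset (CO_I E F) t" using tE by simp
    hence "mk E F A (PreP e') = 0" using inh by blast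
    thus "e' \<in> A" using \<open>e' \<in> E\<close> by (simp add: mk_def split: if_splits)
  qed
  ultimately show "t \<in> E \<and> t \<notin> A \<and> (\<forall>X. ConflP X \<in> CO_S E F \<and> t \<in> X \<longrightarrow> X \<inter> A = {}) \<and>
    (\<forall>e'\<in>E. (Inr e', Inr t) \<in> F\<^sup>+ \<longrightarrow> e' \<in> A)" using tE by blast
next
  assume H: "t \<in> E \<and> t \<notin> A \<and> (\<forall>X. ConflP X \<in> CO_S E F \<and> t \<in> X \<longrightarrow> X \<inter> A = {}) \<and>
    (\<forall>e'\<in>E. (Inr e', Inr t) \<in> F\<^sup>+ \<longrightarrow> e' \<in> A)"
  have "\<forall>s. (if s \<in> preset (CO_F E F) t then 1 else 0) + (if s \<in> readset {} t then 1 else 0) \<le> mk E F A s"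
  proof
    fix s show "(if s \<in> preset (CO_F E F) t then 1 else 0) + (if s \<in> readset {} t then 1 else 0) \<le> mk E F A s"
      using H by (cases s) (auto simp: readset_def mk_def pre_ConflP)
  qed
  moreover have "\<forall>s \<in> inhset (CO_I E F) t. mk E F A s = 0"
  proof
    fix s assume "s \<in> inhset (CO_I E F) t"
    thus "mk E F A s = 0" using H by (cases s) (auto simp: mk_def)
  qed
  ultimately show "enabled E (CO_F E F) (CO_I E F) {} (mk E F A) t"
    using H by (simp add: enabled_def)
qed

definition closedE :: "'e set \<Rightarrow> ('b + 'e) rel \<Rightarrow> 'e set \<Rightarrow> bool" where
  "closedE E F A = (\<forall>e\<in>A. \<forall>e'\<in>E. (Inr e', Inr e) \<in> F\<^sup>+ \<longrightarrow> e' \<in> A)"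
definition cfree :: "'e set \<Rightarrow> ('b + 'e) rel \<Rightarrow> 'e set \<Rightarrow> bool" where
  "cfree E F A = (\<forall>a\<in>A. \<forall>b\<in>A. \<not> occ_conflict E F (Inr a) (Inr b))"

lemma conf_sym: "occ_conflict E F x y \<Longrightarrow> occ_conflict E F y x"
  unfolding occ_conflict_def occ_conflict0_def by blast

lemma conf_inh: "occ_conflict E F x y \<Longrightarrow> (y, z) \<in> F\<^sup>* \<Longrightarrow> occ_conflict E F x z"
  unfolding occ_conflict_def by (meson rtrancl_trans)

lemma prec_iff: "prec (CO_F E F) (CO_I E F) {} t t' \<longleftrightarrow> t \<in> E \<and> t' \<in> E \<and> (Inr t, Inr t') \<in> F\<^sup>+"
proof
  assume "prec (CO_F E F) (CO_I E F) {} t t'"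
  then obtain s where s: "s \<in> preset (CO_F E F) t" "s \<in> inhset (CO_I E F) t'"
    by (auto simp: prec_def readset_def)
  thus "t \<in> E \<and> t' \<in> E \<and> (Inr t, Inr t') \<in> F\<^sup>+" by (cases s) auto
next
  assume "t \<in> E \<and> t' \<in> E \<and> (Inr t, Inr t') \<in> F\<^sup>+"
  hence "PreP t \<in> preset (CO_F E F) t \<inter> inhset (CO_I E F) t'" by simp
  thus "prec (CO_F E F) (CO_I E F) {} t t'" unfolding prec_def by blast
qed

lemma prec_rel_eq: "prec_rel E (CO_F E F) (CO_I E F) {} = {(t, t'). t \<in> E \<and> t' \<in> E \<and> (Inr t, Inr t') \<in> F\<^sup>+}"
  by (auto simp: prec_rel_def prec_iff)

lemma prec_star: "(a, b) \<in> (prec_rel E (CO_F E F) (CO_I E F) {})\<^sup>* \<Longrightarrow> a = b \<or> (Inr a, Inr b) \<in> F\<^sup>+"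
  unfolding prec_rel_eq
  by (induction rule: rtrancl_induct) (auto intro: trancl_trans)

context
  fixes B :: "'b set" and E :: "'e set" and F :: "('b + 'e) rel" and c :: "'b set"
  assumes occ: "occurrence_net B E F c"
begin

lemma F_sub: "F \<subseteq> Inl ` B \<times> Inr ` E \<union> Inr ` E \<times> Inl ` B"
  using occ by (simp add: occurrence_net_def is_net_def)

lemma no_loop: "(x, x) \<notin> F\<^sup>+"
proof
  assume "(x, x) \<in> F\<^sup>+"
  then obtain z where z: "(x, z) \<in> F" "(z, x) \<in> F\<^sup>*" by (auto dest: tranclD)
  let ?D = "Inl ` B \<union> Inr ` E"
  have po: "antisym (Restr (F\<^sup>*) ?D)"
    using occ by (simp add: occurrence_net_def partial_order_on_def)
  have xz: "x \<in> ?D" "z \<in> ?D" using z(1) F_sub by auto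
  have "(x, z) \<in> Restr (F\<^sup>*) ?D" "(z, x) \<in> Restr (F\<^sup>*) ?D" using z xz by auto
  hence "x = z" using po by (auto dest: antisymD)
  thus False using z(1) F_sub by auto
qed

lemma conf_irrefl: "\<not> occ_conflict E F x x"
  using occ by (simp add: occurrence_net_def)

lemma fin_pred: "e \<in> E \<Longrightarrow> finite {e'. (Inr e', Inr e) \<in> F\<^sup>*}"
  using occ by (simp add: occurrence_net_def)

lemma inv:
  "fseq E (CO_F E F) (CO_I E F) {} (CO_m E F) \<sigma> m \<Longrightarrow>
    m = mk E F (set \<sigma>) \<and> distinct \<sigma> \<and> set \<sigma> \<subseteq> E \<and> closedE E F (set \<sigma>) \<and> cfree E F (set \<sigma>)"
proof (induction rule: fseq.induct)
  case fseq_Nil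
  then show ?case by (simp add: CO_m_mk closedE_def cfree_def)
next
  case (fseq_snoc \<sigma> m t)
  hence m: "m = mk E F (set \<sigma>)" and d: "distinct \<sigma>" and sub: "set \<sigma> \<subseteq> E"
    and cl: "closedE E F (set \<sigma>)" and cf: "cfree E F (set \<sigma>)" by auto
  from fseq_snoc.hyps(2)[unfolded m enabled_mk]
  have tE: "t \<in> E" and tn: "t \<notin> set \<sigma>"
    and cX: "\<forall>X. ConflP X \<in> CO_S E F \<and> t \<in> X \<longrightarrow> X \<inter> set \<sigma> = {}"
    and ci: "\<forall>e'\<in>E. (Inr e', Inr t) \<in> F\<^sup>+ \<longrightarrow> e' \<in> set \<sigma>" by auto
  have "fire (CO_F E F) m t = mk E F (set (\<sigma> @ [t]))"
    using fire_mk[OF tE tn cX] m by simp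
  moreover have "closedE E F (set (\<sigma> @ [t]))"
    using cl ci unfolding closedE_def by auto
  moreover have "cfree E F (set (\<sigma> @ [t]))"
    unfolding cfree_def
  proof (intro ballI)
    fix a b assume a: "a \<in> set (\<sigma> @ [t])" and b: "b \<in> set (\<sigma> @ [t])"
    show "\<not> occ_conflict E F (Inr a) (Inr b)"
    proof
      assume ab: "occ_conflict E F (Inr a) (Inr b)"
      have aE: "a \<in> E" "b \<in> E" using a b sub tE by auto
      have C: "ConflP {a, b} \<in> CO_S E F" using ab aE by (auto simp: CO_S_ConflP)
      show False
      proof (cases "a = t")
        case True
        show ?thesis
        proof (cases "b = t")
          case True thus False using ab \<open>a = t\<close> conf_irrefl by simp
        next
          case False
          hence "b \<in> set \<sigma>" using b by auto
          thus False using cX C \<open>a = t\<close> by auto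
        qed
      next
        case False
        hence aS: "a \<in> set \<sigma>" using a by auto
        show ?thesis
        proof (cases "b = t")
          case True thus False using cX C aS by auto
        next
          case False
          hence "b \<in> set \<sigma>" using b by auto
          thus False using cf aS ab unfolding cfree_def by blast
        qed
      qed
    qed
  qed
  ultimately show ?case using d tn sub tE by simp
qed

lemma maximal: "finite A \<Longrightarrow> A \<noteq> {} \<Longrightarrow> \<exists>t\<in>A. \<forall>e\<in>A. (Inr t, Inr e) \<notin> F\<^sup>+"
proof (induction A rule: finite_induct)
  case empty thus ?case by simp
next
  case (insert x A)
  show ?case
  proof (cases "A = {}")
    case True thus ?thesis using no_loop by auto
  next
    case False
    then obtain m where m: "m \<in> A" "\<forall>e\<in>A. (Inr m, Inr e) \<notin> F\<^sup>+" using insert by auto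
    show ?thesis
    proof (cases "(Inr m, Inr x) \<in> F\<^sup>+")
      case True
      have "\<forall>e\<in>insert x A. (Inr x, Inr e) \<notin> F\<^sup>+"
        using True m no_loop by (auto intro: trancl_trans)
      thus ?thesis by blast
    next
      case False thus ?thesis using m by auto
    qed
  qed
qed

lemma construct:
  "finite A \<Longrightarrow> A \<subseteq> E \<Longrightarrow> closedE E F A \<Longrightarrow> cfree E F A \<Longrightarrow>
    \<exists>\<sigma>. set \<sigma> = A \<and> fseq E (CO_F E F) (CO_I E F) {} (CO_m E F) \<sigma> (mk E F A)"
proof (induction A rule: finite_psubset_induct)
  case (psubset A)
  show ?case
  proof (cases "A = {}")
    case True thus ?thesis using fseq_Nil[of E "CO_F E F" "CO_I E F" "{}" "CO_m E F"]
      by (auto simp: CO_m_mk)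
  next
    case False
    then obtain t where t: "t \<in> A" "\<forall>e\<in>A. (Inr t, Inr e) \<notin> F\<^sup>+"
      using maximal[OF psubset(1) False] by blast
    let ?A = "A - {t}"
    have "closedE E F ?A" unfolding closedE_def
    proof (intro ballI impI)
      fix e e' assume e: "e \<in> ?A" "e' \<in> E" "(Inr e', Inr e) \<in> F\<^sup>+"
      have "e' \<in> A" using psubset(4) e unfolding closedE_def by blast
      moreover have "e' \<noteq> t" using t(2) e by auto
      ultimately show "e' \<in> ?A" by simp
    qed
    moreover have "cfree E F ?A" using psubset(5) unfolding cfree_def by blast
    ultimately obtain \<sigma> where \<sigma>: "set \<sigma> = ?A" "fseq E (CO_F E F) (CO_I E F) {} (CO_m E F) \<sigma> (mk E F ?A)"
      using psubset(2)[of ?A] psubset(3) t(1) by (metis Diff_subset insertI1 insert_Diff psubsetI subset_trans Diff_iff)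
    have tE: "t \<in> E" using t psubset(3) by auto
    have cX: "\<forall>X. ConflP X \<in> CO_S E F \<and> t \<in> X \<longrightarrow> X \<inter> ?A = {}"
    proof (intro allI impI)
      fix X assume H: "ConflP X \<in> CO_S E F \<and> t \<in> X"
      then obtain a b where ab: "X = {a, b}" "occ_conflict E F (Inr a) (Inr b)"
        by (auto simp: CO_S_ConflP)
      show "X \<inter> ?A = {}"
      proof (rule ccontr)
        assume "X \<inter> ?A \<noteq> {}"
        then obtain x where "x \<in> X" "x \<in> A" "x \<noteq> t" by auto
        hence "a \<in> A" "b \<in> A" using ab H t by auto
        thus False using psubset(5) ab unfolding cfree_def by blast
      qed
    qed
    have ci: "\<forall>e'\<in>E. (Inr e', Inr t) \<in> F\<^sup>+ \<longrightarrow> e' \<in> ?A"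
    proof (intro ballI impI)
      fix e' assume e: "e' \<in> E" "(Inr e', Inr t) \<in> F\<^sup>+"
      have "e' \<in> A" using psubset(4) e t(1) unfolding closedE_def by blast
      moreover have "e' \<noteq> t" using no_loop e by auto
      ultimately show "e' \<in> ?A" by simp
    qed
    have en: "enabled E (CO_F E F) (CO_I E F) {} (mk E F ?A) t"
      unfolding enabled_mk using tE cX ci by blast
    have "fire (CO_F E F) (mk E F ?A) t = mk E F A"
      using fire_mk[OF tE _ cX] t by (simp add: insert_absorb)
    hence "fseq E (CO_F E F) (CO_I E F) {} (CO_m E F) (\<sigma> @ [t]) (mk E F A)"
      using fseq_snoc[OF \<sigma>(2) en] by simp
    moreover have "set (\<sigma> @ [t]) = A" using \<sigma>(1) t by auto
    ultimately show ?thesis by blast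
  qed
qed


lemma both_state:
  assumes tE: "t \<in> E" and t'E: "t' \<in> E" and nc: "\<not> occ_conflict E F (Inr t) (Inr t')"
  shows "\<exists>X\<in>states E (CO_F E F) (CO_I E F) {} (CO_m E F). t \<in># X \<and> t' \<in># X"
proof -
  let ?A = "{e\<in>E. (Inr e, Inr t) \<in> F\<^sup>*} \<union> {e\<in>E. (Inr e, Inr t') \<in> F\<^sup>*}"
  have fin: "finite ?A"
    using fin_pred[OF tE] fin_pred[OF t'E] by (auto intro: finite_subset)
  have sub: "?A \<subseteq> E" by auto
  have cl: "closedE E F ?A" unfolding closedE_def
    by (auto intro: rtrancl_trans trancl_into_rtrancl)
  have cf: "cfree E F ?A" unfolding cfree_def
  proof (intro ballI notI)
    fix a b assume a: "a \<in> ?A" and b: "b \<in> ?A" and ab: "occ_conflict E F (Inr a) (Inr b)"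
    obtain x where x: "x \<in> {t, t'}" "(Inr a, Inr x) \<in> F\<^sup>*" using a by auto
    obtain y where y: "y \<in> {t, t'}" "(Inr b, Inr y) \<in> F\<^sup>*" using b by auto
    have "occ_conflict E F (Inr a) (Inr y)" using conf_inh[OF ab y(2)] .
    hence "occ_conflict E F (Inr y) (Inr a)" by (rule conf_sym)
    hence "occ_conflict E F (Inr y) (Inr x)" using conf_inh x(2) by blast
    thus False using x(1) y(1) nc conf_irrefl conf_sym by blast
  qed
  obtain \<sigma> where \<sigma>: "set \<sigma> = ?A" "fseq E (CO_F E F) (CO_I E F) {} (CO_m E F) \<sigma> (mk E F ?A)"
    using construct[OF fin sub cl cf] by blast
  have "mset \<sigma> \<in> states E (CO_F E F) (CO_I E F) {} (CO_m E F)"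
    unfolding states_def using \<sigma>(2) by blast
  moreover have "t \<in># mset \<sigma>" "t' \<in># mset \<sigma>" using \<sigma>(1) tE t'E by auto
  ultimately show ?thesis by blast
qed

lemma cn_iff:
  assumes "t \<in> E" "t' \<in> E"
  shows "cn_conflict E (CO_F E F) (CO_I E F) {} (CO_m E F) t t' \<longleftrightarrow> occ_conflict E F (Inr t) (Inr t')"
proof
  assume "cn_conflict E (CO_F E F) (CO_I E F) {} (CO_m E F) t t'"
  thus "occ_conflict E F (Inr t) (Inr t')" using both_state[OF assms] unfolding cn_conflict_def by blast
next
  assume c: "occ_conflict E F (Inr t) (Inr t')"
  show "cn_conflict E (CO_F E F) (CO_I E F) {} (CO_m E F) t t'"
    unfolding cn_conflict_def
  proof
    assume "\<exists>X\<in>states E (CO_F E F) (CO_I E F) {} (CO_m E F). t \<in># X \<and> t' \<in># X"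
    then obtain \<sigma> m where "fseq E (CO_F E F) (CO_I E F) {} (CO_m E F) \<sigma> m" "t \<in> set \<sigma>" "t' \<in> set \<sigma>"
      unfolding states_def by auto
    thus False using inv c unfolding cfree_def by blast
  qed
qed

lemma po_prec: "partial_order_on A (Restr ((prec_rel E (CO_F E F) (CO_I E F) {})\<^sup>*) A)"
  unfolding partial_order_on_def preorder_on_def refl_on_def trans_def antisym_def
proof (intro conjI allI impI ballI)
  fix a b assume "(a, b) \<in> Restr ((prec_rel E (CO_F E F) (CO_I E F) {})\<^sup>*) A"
    "(b, a) \<in> Restr ((prec_rel E (CO_F E F) (CO_I E F) {})\<^sup>*) A"
  hence "(a, b) \<in> (prec_rel E (CO_F E F) (CO_I E F) {})\<^sup>*" "(b, a) \<in> (prec_rel E (CO_F E F) (CO_I E F) {})\<^sup>*" by auto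
  hence "a = b \<or> (Inr a, Inr b) \<in> F\<^sup>+" "b = a \<or> (Inr b, Inr a) \<in> F\<^sup>+" by (auto dest: prec_star)
  thus "a = b"
  proof (rule_tac ccontr)
    assume ab: "a = b \<or> (Inr a, Inr b) \<in> F\<^sup>+" "b = a \<or> (Inr b, Inr a) \<in> F\<^sup>+" "a \<noteq> b"
    hence "(Inr a, Inr b) \<in> F\<^sup>+" "(Inr b, Inr a) \<in> F\<^sup>+" by auto
    hence "(Inr a, Inr a) \<in> F\<^sup>+" by (rule trancl_trans)
    thus False using no_loop by blast
  qed
qed (auto intro: rtrancl_trans)

lemma no_post_out: "(Inl (PostP e), y) \<notin> CO_F E F"
  by (auto simp: CO_F_def)

lemma no_tt: "(Inr t, Inr t') \<notin> (CO_F E F)\<^sup>+"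
proof
  assume "(Inr t, Inr t') \<in> (CO_F E F)\<^sup>+"
  then obtain z where z: "(Inr t, z) \<in> CO_F E F" "(z, Inr t') \<in> (CO_F E F)\<^sup>*" by (auto dest: tranclD)
  have "z = Inl (PostP t)" using z(1) by (auto simp: CO_F_def)
  with z(2) show False
    by (metis no_post_out rtranclE sum.distinct(1) converse_rtranclE)
qed

lemma pl_post_PreP: "pl_postset (CO_F E F) (PreP e) = (if e \<in> E then {e} else {})"
  by (auto simp: pl_postset_def CO_F_def)

lemma inh_sub: "inhset (CO_I E F) t \<subseteq> PreP ` {e'. (Inr e', Inr t) \<in> F\<^sup>*}"
  by (auto simp: inhset_def CO_I_def)

lemma safe: "safe_net E (CO_F E F) (CO_I E F) {} (CO_m E F)"
  unfolding safe_net_def reach_markings_def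
proof (intro ballI allI)
  fix m s assume "m \<in> {m. \<exists>\<sigma>. fseq E (CO_F E F) (CO_I E F) {} (CO_m E F) \<sigma> m}"
  then obtain \<sigma> where "fseq E (CO_F E F) (CO_I E F) {} (CO_m E F) \<sigma> m" by blast
  hence "m = mk E F (set \<sigma>)" using inv by blast
  thus "m s \<le> 1" by (simp add: mk_def split: cplace.split)
qed

end

theorem mainTheorem11:
  fixes B :: "'b set" and E :: "'e set" and F :: "('b + 'e) rel" and c :: "'b set"
  assumes "occurrence_net B E F c"
  shows "occurrence_causal_net (CO_S E F) E (CO_F E F) (CO_I E F) {} (CO_m E F) (id :: 'e \<Rightarrow> 'e)"
proof -
  note occ = assms
  let ?S = "CO_S E F" and ?F = "CO_F E F" and ?I = "CO_I E F" and ?m = "CO_m E F"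
  have isnet: "is_net ?S E ?F ?m"
    unfolding is_net_def by (auto simp: CO_F_def CO_m_def dest: CO_S_ConflP_sub split: if_splits)
  have pne: "\<forall>t\<in>E. preset ?F t \<noteq> {}"
  proof
    fix t assume "t \<in> E" hence "PreP t \<in> preset ?F t" by simp
    thus "preset ?F t \<noteq> {}" by blast
  qed
  have cnet: "contextual_net ?S E ?F ?I {} ?m id"
    unfolding contextual_net_def using isnet safe[OF occ] pne
    by (auto simp: CO_I_def)
  have p1: "\<forall>t \<in> E. \<forall>t' \<in> E. (Inr t, Inr t') \<notin> ?F\<^sup>+" using no_tt[OF occ] by blast
  have p2: "\<forall>t \<in> E. preset ?F t \<inter> inhset ?I t = {} \<and> postset ?F t \<inter> readset {} t = {}"
  proof
    fix t assume tE: "t \<in> E"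
    have "preset ?F t \<inter> inhset ?I t = {}"
    proof (rule ccontr)
      assume "preset ?F t \<inter> inhset ?I t \<noteq> {}"
      then obtain s where "s \<in> preset ?F t" "s \<in> inhset ?I t" by blast
      thus False using no_loop[OF occ] by (cases s) auto
    qed
    thus "preset ?F t \<inter> inhset ?I t = {} \<and> postset ?F t \<inter> readset {} t = {}"
      by (simp add: readset_def)
  qed
  have p3: "\<forall>t \<in> E. \<forall>s \<in> inhset ?I t. card (id ` pl_postset ?F s) = 1"
  proof (intro ballI)
    fix t s assume "t \<in> E" "s \<in> inhset ?I t"
    thus "card (id ` pl_postset ?F s) = 1" by (cases s) (auto simp: pl_post_PreP[OF occ])
  qed
  have p4: "\<forall>t \<in> E. \<forall>t' \<in> E. prec ?F ?I {} t t' \<longrightarrow> \<not> prec ?F ?I {} t' t"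
    using no_loop[OF occ] by (auto simp: prec_iff intro: trancl_trans)
  have p5: "\<forall>t \<in> E. finite (inhset ?I t \<union> readset {} t)"
  proof
    fix t assume "t \<in> E"
    hence "finite (PreP ` {e'. (Inr e', Inr t) \<in> F\<^sup>*})" using fin_pred[OF occ] by blast
    hence "finite (inhset ?I t)" using inh_sub[OF occ] by (rule finite_subset[rotated])
    thus "finite (inhset ?I t \<union> readset {} t)" by (simp add: readset_def)
  qed
  have p6: "\<forall>t \<in> E. \<forall>t' \<in> E. cn_conflict E ?F ?I {} ?m t t' \<longrightarrow> preset ?F t \<inter> preset ?F t' \<noteq> {}"
  proof (intro ballI impI)
    fix t t' assume tt: "t \<in> E" "t' \<in> E" "cn_conflict E ?F ?I {} ?m t t'"
    hence c: "occ_conflict E F (Inr t) (Inr t')" using cn_iff[OF occ] by blast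
    hence "ConflP {t, t'} \<in> ?S" using tt by (auto simp: CO_S_ConflP)
    hence "ConflP {t, t'} \<in> preset ?F t \<inter> preset ?F t'" by (simp add: pre_ConflP)
    thus "preset ?F t \<inter> preset ?F t' \<noteq> {}" by blast
  qed
  have p7: "\<forall>t \<in> E. \<forall>t' \<in> E. t \<noteq> t' \<and> id t = id t' \<longrightarrow> cn_conflict E ?F ?I {} ?m t t'" by simp
  have pc: "pre_causal ?S E ?F ?I {} ?m id"
    unfolding pre_causal_def by (intro conjI cnet p1 p2 p3 p4 p5 p6 p7)
  have ca: "\<forall>X \<in> states E ?F ?I {} ?m.
        partial_order_on (set_mset X) (Restr ((prec_rel E ?F ?I {})\<^sup>*) (set_mset X))"
    by (intro ballI po_prec[OF occ])
  have cb: "\<forall>t \<in> E. \<exists>X \<in> states E ?F ?I {} ?m. t \<in># X"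
  proof
    fix t assume "t \<in> E"
    thus "\<exists>X \<in> states E ?F ?I {} ?m. t \<in># X" using both_state[OF occ, of t t] conf_irrefl[OF occ] by blast
  qed
  have cn: "causal_net ?S E ?F ?I {} ?m id"
    unfolding causal_net_def by (intro conjI pc ca cb)
  have last: "\<forall>t \<in> E. \<forall>t' \<in> E. \<forall>t'' \<in> E.
        cn_conflict E ?F ?I {} ?m t t' \<and> (t', t'') \<in> (prec_rel E ?F ?I {})\<^sup>* \<longrightarrow> cn_conflict E ?F ?I {} ?m t t''"
  proof (intro ballI impI)
    fix t t' t'' assume tt: "t \<in> E" "t' \<in> E" "t'' \<in> E"
      and H: "cn_conflict E ?F ?I {} ?m t t' \<and> (t', t'') \<in> (prec_rel E ?F ?I {})\<^sup>*"
    have c: "occ_conflict E F (Inr t) (Inr t')" using H cn_iff[OF occ tt(1,2)] by blast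
    have "(Inr t', Inr t'') \<in> F\<^sup>*" using prec_star H by (metis rtrancl.rtrancl_refl trancl_into_rtrancl)
    hence "occ_conflict E F (Inr t) (Inr t'')" using conf_inh c by blast
    thus "cn_conflict E ?F ?I {} ?m t t''" using cn_iff[OF occ tt(1,3)] by blast
  qed
  show ?thesis unfolding occurrence_causal_net_def
    by (intro conjI cn last po_prec[OF occ] refl inj_on_id)
qed

end
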